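(* Let $\theta\mapsto P_\theta$ ($\theta$ in an open subset of $\mathbb{R}$) be a family of regular $X\times X$ transition matrices, differentiable in $\theta$, with stationary distribution $\pi_\theta$ and Dobrushin coefficient $\rho<1$. Suppose $\nabla_\theta (P_\theta)_{ij}=g_{i}\bigl(\dot P_{ij}-\ddot P_{ij}\bigr)$ for all $i,j$, where $\dot P,\ddot P$ are transition matrices and $g_1,\dots,g_X$ are real constants. Fix $c\in\mathbb{R}^X$, an initial distribution $\pi_0$, and integers $m\ge1$, $N\ge0$. Simulate $x_0\sim\pi_0$ and $x_1,\dots,x_{m-1}$ with transition matrix $P_\theta$; then, given $x_{m-1}$, draw $\dot x_m\sim\dot P_{x_{m-1},\cdot}$ and $\ddot x_m\sim\ddot P_{x_{m-1},\cdot}$; then propagate $\dot x_{m+1},\dots,\dot x_{m+N}$ and $\ddot x_{m+1},\dots,\ddot x_{m+N}$ each as Markov chains with transition matrix $P_\theta$ (with an arbitrary joint coupling between the two chains). Define $\widehat G_{m,N}=g_{x_{m-1}}\sum_{k=m}^{m+N}\bigl(c(\dot x_k)-c(\ddot x_k)\bigr)$. Then there exist constants $K_1,K_2$ independent of $m,N,\pi_0$ such that $$\bigl|\mathbb{E}\{\widehat G_{m,N}\}-\nabla_\theta(c'\pi_\theta)\bigr|\le K_1\rho^m\,d_V(\pi_0,\pi_\theta)+K_2\rho^N .$$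
   Context: A transition matrix is regular if some power has all entries strictly positive. The Dobrushin coefficient of $P$ is $\rho=\frac12\max_{i,j}\sum_l|P_{il}-P_{jl}|$. The variational distance is $d_V(\pi,\bar\pi)=\frac12\sum_i|\pi(i)-\bar\pi(i)|$. *)

theory Defs
  imports "HOL-Probability.Probability"
begin

definition mmult :: "('x::finite \<Rightarrow> 'x \<Rightarrow> real) \<Rightarrow> ('x \<Rightarrow> 'x \<Rightarrow> real) \<Rightarrow> 'x \<Rightarrow> 'x \<Rightarrow> real" where
  "mmult A B = (\<lambda>i j. \<Sum>l\<in>UNIV. A i l * B l j)"

fun mpow :: "('x::finite \<Rightarrow> 'x \<Rightarrow> real) \<Rightarrow> nat \<Rightarrow> 'x \<Rightarrow> 'x \<Rightarrow> real" where
  "mpow A 0 = (\<lambda>i j. if i = j then 1 else 0)"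
| "mpow A (Suc n) = mmult (mpow A n) A"

definition prob_vector :: "('x::finite \<Rightarrow> real) \<Rightarrow> bool" where
  "prob_vector p \<longleftrightarrow> (\<forall>i. 0 \<le> p i) \<and> (\<Sum>i\<in>UNIV. p i) = 1"

definition stochastic :: "('x::finite \<Rightarrow> 'x \<Rightarrow> real) \<Rightarrow> bool" where
  "stochastic P \<longleftrightarrow> (\<forall>i. prob_vector (P i))"

definition regular :: "('x::finite \<Rightarrow> 'x \<Rightarrow> real) \<Rightarrow> bool" where
  "regular P \<longleftrightarrow> (\<exists>n. \<forall>i j. 0 < mpow P n i j)"

definition stationary :: "('x::finite \<Rightarrow> 'x \<Rightarrow> real) \<Rightarrow> ('x \<Rightarrow> real) \<Rightarrow> bool" where
  "stationary P p \<longleftrightarrow> prob_vector p \<and> (\<forall>j. (\<Sum>i\<in>UNIV. p i * P i j) = p j)"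

definition dobrushin :: "('x::finite \<Rightarrow> 'x \<Rightarrow> real) \<Rightarrow> real" where
  "dobrushin P = (1/2) * Max ((\<lambda>(i,j). \<Sum>l\<in>UNIV. \<bar>P i l - P j l\<bar>) ` UNIV)"

definition var_dist :: "('x::finite \<Rightarrow> real) \<Rightarrow> ('x \<Rightarrow> real) \<Rightarrow> real" where
  "var_dist p q = (1/2) * (\<Sum>i\<in>UNIV. \<bar>p i - q i\<bar>)"

end

theory Submission
  imports Defs
begin


definition vm :: "('x::finite \<Rightarrow> real) \<Rightarrow> ('x \<Rightarrow> 'x \<Rightarrow> real) \<Rightarrow> 'x \<Rightarrow> real" where
  "vm v A = (\<lambda>j. \<Sum>i\<in>UNIV. v i * A i j)"

fun itv :: "('x::finite \<Rightarrow> 'x \<Rightarrow> real) \<Rightarrow> ('x \<Rightarrow> real) \<Rightarrow> nat \<Rightarrow> 'x \<Rightarrow> real" where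
  "itv A v 0 = v"
| "itv A v (Suc n) = vm (itv A v n) A"

definition dotp :: "('x::finite \<Rightarrow> real) \<Rightarrow> ('x \<Rightarrow> real) \<Rightarrow> real" where
  "dotp v f = (\<Sum>i\<in>UNIV. v i * f i)"

definition l1 :: "('x::finite \<Rightarrow> real) \<Rightarrow> real" where
  "l1 v = (\<Sum>i\<in>UNIV. \<bar>v i\<bar>)"

lemma dob_pair: "(\<Sum>l\<in>UNIV. \<bar>A i l - A j l\<bar>) \<le> 2 * dobrushin A"
proof -
  have "(\<Sum>l\<in>UNIV. \<bar>A i l - A j l\<bar>) \<in> (\<lambda>(i,j). \<Sum>l\<in>UNIV. \<bar>A i l - A j l\<bar>) ` UNIV"
    by (auto intro!: image_eqI[where x="(i,j)"])
  hence "(\<Sum>l\<in>UNIV. \<bar>A i l - A j l\<bar>) \<le> Max ((\<lambda>(i,j). \<Sum>l\<in>UNIV. \<bar>A i l - A j l\<bar>) ` UNIV)"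
    by (intro Max_ge) auto
  thus ?thesis unfolding dobrushin_def by simp
qed

lemma dob_nonneg: "0 \<le> dobrushin (A::'x::finite \<Rightarrow> 'x \<Rightarrow> real)"
proof -
  obtain i :: 'x where True by simp
  have "0 \<le> (\<Sum>l\<in>UNIV. \<bar>A i l - A i l\<bar>)" by simp
  also have "\<dots> \<le> 2 * dobrushin A" by (rule dob_pair)
  finally show ?thesis by simp
qed

lemma l1_nonneg: "0 \<le> l1 v" unfolding l1_def by (simp add: sum_nonneg)

lemma contract:
  fixes v :: "'x::finite \<Rightarrow> real"
  assumes s0: "(\<Sum>i\<in>UNIV. v i) = 0"
  shows "l1 (vm v A) \<le> dobrushin A * l1 v"
proof -
  define vp where "vp i = max (v i) 0" for i
  define vn where "vn i = max (- v i) 0" for i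
  define s where "s = (\<Sum>i\<in>UNIV. vp i)"
  have vpn: "v i = vp i - vn i" for i unfolding vp_def vn_def by auto
  have absv: "\<bar>v i\<bar> = vp i + vn i" for i unfolding vp_def vn_def by auto
  have vp0: "0 \<le> vp i" for i unfolding vp_def by auto
  have vn0: "0 \<le> vn i" for i unfolding vn_def by auto
  have sn: "(\<Sum>i\<in>UNIV. vn i) = s"
    using s0 unfolding s_def by (simp add: vpn sum_subtractf)
  have l1v: "l1 v = 2 * s" unfolding l1_def absv by (simp add: sum.distrib sn s_def)
  show ?thesis
  proof (cases "s = 0")
    case True
    hence "vp i = 0" for i using vp0 unfolding s_def by (simp add: sum_nonneg_eq_0_iff)
    moreover have "vn i = 0" for i using True sn vn0 by (simp add: sum_nonneg_eq_0_iff)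
    ultimately have "v i = 0" for i by (simp add: vpn)
    thus ?thesis by (simp add: l1_def vm_def)
  next
    case False
    hence spos: "s > 0" unfolding s_def using vp0 by (metis order_le_less sum_nonneg)
    have key: "vm v A l = (1/s) * (\<Sum>i\<in>UNIV. \<Sum>j\<in>UNIV. vp i * vn j * (A i l - A j l))" for l
    proof -
      have "(\<Sum>i\<in>UNIV. \<Sum>j\<in>UNIV. vp i * vn j * (A i l - A j l))
          = (\<Sum>i\<in>UNIV. \<Sum>j\<in>UNIV. vp i * vn j * A i l) - (\<Sum>i\<in>UNIV. \<Sum>j\<in>UNIV. vp i * vn j * A j l)"
        by (simp add: algebra_simps sum_subtractf)
      also have "\<dots> = s * (\<Sum>i\<in>UNIV. vp i * A i l) - s * (\<Sum>j\<in>UNIV. vn j * A j l)"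
      proof -
        have "(\<Sum>i\<in>UNIV. \<Sum>j\<in>UNIV. vp i * vn j * A i l) = (\<Sum>i\<in>UNIV. vp i * A i l * (\<Sum>j\<in>UNIV. vn j))"
          by (simp add: sum_distrib_left mult_ac)
        moreover have "(\<Sum>i\<in>UNIV. \<Sum>j\<in>UNIV. vp i * vn j * A j l) = (\<Sum>j\<in>UNIV. vn j * A j l * (\<Sum>i\<in>UNIV. vp i))"
          by (subst sum.swap) (simp add: sum_distrib_left sum_distrib_right mult_ac)
        ultimately show ?thesis using sn by (simp add: s_def sum_distrib_left sum_distrib_right mult_ac)
      qed
      also have "\<dots> = s * vm v A l" unfolding vm_def by (simp add: vpn algebra_simps sum_subtractf)
      finally show ?thesis using spos by simp
    qed
    have "l1 (vm v A) \<le> (\<Sum>l\<in>UNIV. (1/s) * (\<Sum>i\<in>UNIV. \<Sum>j\<in>UNIV. vp i * vn j * \<bar>A i l - A j l\<bar>))"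
      unfolding l1_def
    proof (rule sum_mono)
      fix l
      have "\<bar>vm v A l\<bar> = (1/s) * \<bar>\<Sum>i\<in>UNIV. \<Sum>j\<in>UNIV. vp i * vn j * (A i l - A j l)\<bar>"
        using spos by (simp add: key abs_mult)
      also have "\<dots> \<le> (1/s) * (\<Sum>i\<in>UNIV. \<Sum>j\<in>UNIV. vp i * vn j * \<bar>A i l - A j l\<bar>)"
      proof (rule mult_left_mono)
        show "\<bar>\<Sum>i\<in>UNIV. \<Sum>j\<in>UNIV. vp i * vn j * (A i l - A j l)\<bar> \<le> (\<Sum>i\<in>UNIV. \<Sum>j\<in>UNIV. vp i * vn j * \<bar>A i l - A j l\<bar>)"
          by (rule order_trans[OF sum_abs], rule sum_mono, rule order_trans[OF sum_abs], rule sum_mono)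
             (simp add: abs_mult vp0 vn0)
      qed (use spos in simp)
      finally show "\<bar>vm v A l\<bar> \<le> (1/s) * (\<Sum>i\<in>UNIV. \<Sum>j\<in>UNIV. vp i * vn j * \<bar>A i l - A j l\<bar>)" .
    qed
    also have "\<dots> = (1/s) * (\<Sum>i\<in>UNIV. \<Sum>j\<in>UNIV. vp i * vn j * (\<Sum>l\<in>UNIV. \<bar>A i l - A j l\<bar>))"
    proof -
      have "(\<Sum>l\<in>UNIV. (1/s) * (\<Sum>i\<in>UNIV. \<Sum>j\<in>UNIV. vp i * vn j * \<bar>A i l - A j l\<bar>))
         = (1/s) * (\<Sum>l\<in>UNIV. \<Sum>i\<in>UNIV. \<Sum>j\<in>UNIV. vp i * vn j * \<bar>A i l - A j l\<bar>)"
        by (simp only: sum_distrib_left)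
      also have "(\<Sum>l\<in>UNIV. \<Sum>i\<in>UNIV. \<Sum>j\<in>UNIV. vp i * vn j * \<bar>A i l - A j l\<bar>)
          = (\<Sum>i\<in>UNIV. \<Sum>l\<in>UNIV. \<Sum>j\<in>UNIV. vp i * vn j * \<bar>A i l - A j l\<bar>)"
        by (rule sum.swap)
      also have "\<dots> = (\<Sum>i\<in>UNIV. \<Sum>j\<in>UNIV. \<Sum>l\<in>UNIV. vp i * vn j * \<bar>A i l - A j l\<bar>)"
        by (rule sum.cong[OF refl], rule sum.swap)
      also have "\<dots> = (\<Sum>i\<in>UNIV. \<Sum>j\<in>UNIV. vp i * vn j * (\<Sum>l\<in>UNIV. \<bar>A i l - A j l\<bar>))"
        by (simp only: sum_distrib_left)
      finally show ?thesis .
    qed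
    also have "\<dots> \<le> (1/s) * (\<Sum>i\<in>UNIV. \<Sum>j\<in>UNIV. vp i * vn j * (2 * dobrushin A))"
      using spos by (intro mult_left_mono sum_mono mult_left_mono dob_pair) (auto simp: vp0 vn0)
    also have "\<dots> = (1/s) * (s * s * (2 * dobrushin A))"
    proof -
      have "(\<Sum>i\<in>UNIV. \<Sum>j\<in>UNIV. vp i * vn j * (2 * dobrushin A)) = (\<Sum>i\<in>UNIV. vp i * ((\<Sum>j\<in>UNIV. vn j) * (2 * dobrushin A)))"
        by (simp only: sum_distrib_left sum_distrib_right mult.assoc)
      also have "\<dots> = s * s * (2 * dobrushin A)" by (simp only: sn s_def sum_distrib_right[symmetric])
      finally show ?thesis by simp
    qed
    also have "\<dots> = dobrushin A * l1 v" using spos l1v by simp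
    finally show ?thesis .
  qed
qed


lemma vm_sum: "stochastic A \<Longrightarrow> (\<Sum>j\<in>UNIV. vm v A j) = (\<Sum>i\<in>UNIV. v i)"
  unfolding vm_def stochastic_def prob_vector_def
  by (subst sum.swap) (simp add: sum_distrib_left[symmetric])

lemma itv_sum: "stochastic A \<Longrightarrow> (\<Sum>j\<in>UNIV. itv A v n j) = (\<Sum>i\<in>UNIV. v i)"
  by (induction n) (simp_all add: vm_sum)

lemma itv_contract:
  assumes "stochastic A" "(\<Sum>i\<in>UNIV. v i) = 0"
  shows "l1 (itv A v n) \<le> dobrushin A ^ n * l1 v"
proof (induction n)
  case 0 thus ?case by simp
next
  case (Suc n)
  have "l1 (itv A v (Suc n)) \<le> dobrushin A * l1 (itv A v n)"
    using contract[of "itv A v n" A] itv_sum[OF assms(1)] assms(2) by simp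
  also have "\<dots> \<le> dobrushin A * (dobrushin A ^ n * l1 v)"
    using Suc dob_nonneg by (intro mult_left_mono) auto
  finally show ?case by simp
qed

lemma itv_lin:
  fixes V :: "'b \<Rightarrow> 'x::finite \<Rightarrow> real"
  shows "itv A (\<lambda>k. \<Sum>l\<in>L. a l * V l k) n = (\<lambda>k. \<Sum>l\<in>L. a l * itv A (V l) n k)"
proof (induction n)
  case 0 thus ?case by simp
next
  case (Suc n)
  show ?case
    apply (rule ext)
    apply (simp add: Suc vm_def sum_distrib_right sum_distrib_left mult_ac)
    by (rule sum.swap)
qed

lemma itv_diff:
  "itv A (\<lambda>k. v k - w k) n = (\<lambda>k. itv A v n k - itv A w n k)"
  by (induction n) (simp_all add: vm_def algebra_simps sum_subtractf)

lemma itv_shift: "itv A (vm v A) n = itv A v (Suc n)"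
  by (induction n) simp_all

lemma itv_stat: "stationary A p \<Longrightarrow> itv A p n = p"
  by (induction n) (auto simp: stationary_def vm_def)

lemma itv_prob: "stochastic A \<Longrightarrow> prob_vector v \<Longrightarrow> prob_vector (itv A v n)"
proof (induction n)
  case 0 thus ?case by simp
next
  case (Suc n)
  hence "prob_vector (itv A v n)" by simp
  moreover have "0 \<le> vm (itv A v n) A j" for j
    using calculation Suc.prems unfolding prob_vector_def stochastic_def vm_def
    by (auto intro!: sum_nonneg mult_nonneg_nonneg)
  ultimately show ?case using vm_sum[OF Suc.prems(1), of "itv A v n"]
    unfolding prob_vector_def by simp
qed

lemma dot_vm: "dotp (vm v A) f = dotp v (\<lambda>i. \<Sum>j\<in>UNIV. A i j * f j)"
  unfolding dotp_def vm_def
  by (simp add: sum_distrib_left sum_distrib_right mult_ac) (rule sum.swap)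

lemma dot_bound: "\<bar>dotp v f\<bar> \<le> l1 v * l1 f"
proof -
  have "\<bar>dotp v f\<bar> \<le> (\<Sum>i\<in>UNIV. \<bar>v i\<bar> * \<bar>f i\<bar>)"
    unfolding dotp_def by (rule order_trans[OF sum_abs]) (simp add: abs_mult)
  also have "\<dots> \<le> (\<Sum>i\<in>UNIV. \<bar>v i\<bar> * l1 f)"
  proof (rule sum_mono, rule mult_left_mono)
    fix i show "\<bar>f i\<bar> \<le> l1 f" unfolding l1_def
      by (rule member_le_sum[where f="\<lambda>i. \<bar>f i\<bar>"]) auto
  qed simp
  also have "\<dots> = l1 v * l1 f" unfolding l1_def by (simp add: sum_distrib_right)
  finally show ?thesis .
qed



lemma dotp_diff: "dotp (\<lambda>k. v k - w k) f = dotp v f - dotp w f"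
  unfolding dotp_def by (simp add: algebra_simps sum_subtractf)

lemma dotp_lin: "dotp (\<lambda>k. \<Sum>l\<in>L. a l * V l k) f = (\<Sum>l\<in>L. a l * dotp (V l) f)"
  unfolding dotp_def by (simp add: sum_distrib_left sum_distrib_right mult_ac) (rule sum.swap)

lemma poisson_exists:
  fixes P :: "'x::finite \<Rightarrow> 'x \<Rightarrow> real"
  assumes st: "stochastic P" and sta: "stationary P p" and rho: "dobrushin P < 1"
  shows "\<exists>h. \<forall>j. (\<Sum>l\<in>UNIV. P j l * h l) = h j - c j + dotp p c"
proof -
  define e :: "'x \<Rightarrow> 'x \<Rightarrow> real" where "e j = (\<lambda>l. if l = j then 1 else 0)" for j
  define \<kappa> where "\<kappa> = dotp p c"
  define t where "t j n = dotp (itv P (e j) n) c - \<kappa>" for j n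
  have psum: "(\<Sum>i\<in>UNIV. p i) = 1" using sta unfolding stationary_def prob_vector_def by simp
  have t_alt: "t j n = dotp (itv P (\<lambda>l. e j l - p l) n) c" for j n
    unfolding t_def \<kappa>_def itv_diff dotp_diff itv_stat[OF sta] ..
  have summ: "summable (t j)" for j
  proof (rule summable_comparison_test[where g="\<lambda>n. dobrushin P ^ n * (l1 (\<lambda>l. e j l - p l) * l1 c)"])
    have "(\<Sum>i\<in>UNIV. e j i - p i) = 0" using psum by (simp add: sum_subtractf e_def)
    note ic = itv_contract[OF st this]
    have "\<bar>t j n\<bar> \<le> dobrushin P ^ n * (l1 (\<lambda>l. e j l - p l) * l1 c)" for n
      unfolding t_alt
      by (rule order_trans[OF dot_bound]) (simp add: mult.assoc[symmetric] l1_nonneg mult_right_mono ic)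
    thus "\<exists>N. \<forall>n\<ge>N. norm (t j n) \<le> dobrushin P ^ n * (l1 (\<lambda>l. e j l - p l) * l1 c)" by auto
    show "summable (\<lambda>n. dobrushin P ^ n * (l1 (\<lambda>l. e j l - p l) * l1 c))"
      using rho dob_nonneg[of P] by (intro summable_mult2 summable_geometric) auto
  qed
  define h where "h j = suminf (t j)" for j
  have "(\<Sum>l\<in>UNIV. P j l * h l) = h j - c j + \<kappa>" for j
  proof -
    have "(\<Sum>l\<in>UNIV. P j l * h l) = (\<Sum>l\<in>UNIV. \<Sum>n. P j l * t l n)"
      unfolding h_def by (simp add: suminf_mult summ)
    also have "\<dots> = (\<Sum>n. \<Sum>l\<in>UNIV. P j l * t l n)"
      by (rule suminf_sum[symmetric]) (simp add: summable_mult summ)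
    also have "\<dots> = (\<Sum>n. t j (Suc n))"
    proof (rule suminf_cong)
      fix n
      have rowsum: "(\<Sum>l\<in>UNIV. P j l) = 1" using st unfolding stochastic_def prob_vector_def by simp
      have Pj: "P j = (\<lambda>k. \<Sum>l\<in>UNIV. P j l * e l k)" unfolding e_def by (rule ext) (simp add: if_distrib[where f="\<lambda>x. _ * x"] cong: if_cong)
      have vmj: "vm (e j) P = P j" unfolding e_def vm_def by (rule ext) (simp add: if_distrib[where f="\<lambda>x. x * _"] cong: if_cong)
      have "(\<Sum>l\<in>UNIV. P j l * t l n) = (\<Sum>l\<in>UNIV. P j l * dotp (itv P (e l) n) c) - \<kappa>"
        unfolding t_def by (simp add: right_diff_distrib sum_subtractf sum_distrib_right[symmetric] rowsum)
      also have "(\<Sum>l\<in>UNIV. P j l * dotp (itv P (e l) n) c) = dotp (itv P (P j) n) c"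
        by (subst (2) Pj) (simp add: itv_lin dotp_lin)
      also have "itv P (P j) n = itv P (e j) (Suc n)" by (simp add: vmj[symmetric] itv_shift)
      finally show "(\<Sum>l\<in>UNIV. P j l * t l n) = t j (Suc n)" unfolding t_def .
    qed
    also have "\<dots> = h j - t j 0" unfolding h_def by (rule suminf_split_head[OF summ])
    also have "t j 0 = c j - \<kappa>" unfolding t_def dotp_def e_def by (simp add: if_distrib[where f="\<lambda>x. x * _"] cong: if_cong)
    finally show ?thesis by simp
  qed
  thus ?thesis unfolding \<kappa>_def by blast
qed



lemma sum_PiE_insert:
  assumes "x \<notin> S"
  shows "(\<Sum>b\<in>Pi\<^sub>E (insert x S) T. f b) = (\<Sum>y\<in>T x. \<Sum>g\<in>Pi\<^sub>E S T. f (g(x := y)))"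
proof -
  have "(\<Sum>b\<in>Pi\<^sub>E (insert x S) T. f b) = (\<Sum>p\<in>T x \<times> Pi\<^sub>E S T. f ((\<lambda>(y, g). g(x := y)) p))"
    unfolding PiE_insert_eq by (rule sum.reindex[OF inj_combinator[OF assms], unfolded comp_def])
  also have "\<dots> = (\<Sum>y\<in>T x. \<Sum>g\<in>Pi\<^sub>E S T. f (g(x := y)))"
    by (simp add: sum.cartesian_product prod.case_distrib)
  finally show ?thesis .
qed

lemma ivl_insert: "{m..m + Suc n} = insert (m + Suc n) {m..m+n}" by auto

lemma path_A:
  fixes A :: "'x::finite \<Rightarrow> 'x \<Rightarrow> real"
  shows "(\<Sum>b\<in>Pi\<^sub>E {m..m+n} (\<lambda>_. UNIV). v (b m) * (\<Prod>k\<in>{m..<m+n}. A (b k) (b (Suc k))) * F (b (m+n)))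
     = dotp (itv A v n) F"
proof (induction n arbitrary: F)
  case 0
  have "(\<Sum>b\<in>Pi\<^sub>E {m..m+0} (\<lambda>_. UNIV). v (b m) * (\<Prod>k\<in>{m..<m+0}. A (b k) (b (Suc k))) * F (b (m+0)))
     = (\<Sum>b\<in>Pi\<^sub>E (insert m {}) (\<lambda>_. UNIV). v (b m) * F (b m))" by simp
  also have "\<dots> = dotp v F" by (subst sum_PiE_insert) (auto simp: dotp_def)
  finally show ?case by simp
next
  case (Suc n)
  let ?x = "m + Suc n"
  have "(\<Sum>b\<in>Pi\<^sub>E {m..m+Suc n} (\<lambda>_. UNIV). v (b m) * (\<Prod>k\<in>{m..<m+Suc n}. A (b k) (b (Suc k))) * F (b (m+Suc n)))
    = (\<Sum>y\<in>UNIV. \<Sum>g\<in>Pi\<^sub>E {m..m+n} (\<lambda>_. UNIV). v ((g(?x:=y)) m) * (\<Prod>k\<in>{m..<m+Suc n}. A ((g(?x:=y)) k) ((g(?x:=y)) (Suc k))) * F y)"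
    unfolding ivl_insert by (subst sum_PiE_insert) auto
  also have "\<dots> = (\<Sum>y\<in>UNIV. \<Sum>g\<in>Pi\<^sub>E {m..m+n} (\<lambda>_. UNIV). v (g m) * (\<Prod>k\<in>{m..<m+n}. A (g k) (g (Suc k))) * (A (g (m+n)) y * F y))"
  proof (intro sum.cong refl)
    fix y g
    have "(\<Prod>k\<in>{m..<m+Suc n}. A ((g(?x:=y)) k) ((g(?x:=y)) (Suc k)))
        = (\<Prod>k\<in>{m..<m+n}. A ((g(?x:=y)) k) ((g(?x:=y)) (Suc k))) * A (g (m+n)) y"
      by (simp add: prod.op_ivl_Suc)
    also have "(\<Prod>k\<in>{m..<m+n}. A ((g(?x:=y)) k) ((g(?x:=y)) (Suc k))) = (\<Prod>k\<in>{m..<m+n}. A (g k) (g (Suc k)))"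
      by (rule prod.cong) auto
    finally show "v ((g(?x:=y)) m) * (\<Prod>k\<in>{m..<m+Suc n}. A ((g(?x:=y)) k) ((g(?x:=y)) (Suc k))) * F y
       = v (g m) * (\<Prod>k\<in>{m..<m+n}. A (g k) (g (Suc k))) * (A (g (m+n)) y * F y)" by simp
  qed
  also have "\<dots> = (\<Sum>g\<in>Pi\<^sub>E {m..m+n} (\<lambda>_. UNIV). v (g m) * (\<Prod>k\<in>{m..<m+n}. A (g k) (g (Suc k))) * (\<lambda>i. \<Sum>y\<in>UNIV. A i y * F y) (g (m+n)))"
    by (subst sum.swap) (simp add: sum_distrib_left)
  also have "\<dots> = dotp (itv A v n) (\<lambda>i. \<Sum>y\<in>UNIV. A i y * F y)" by (rule Suc.IH)
  also have "\<dots> = dotp (itv A v (Suc n)) F" by (simp add: dot_vm)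
  finally show ?case .
qed

lemma path_B:
  fixes A :: "'x::finite \<Rightarrow> 'x \<Rightarrow> real"
  assumes st: "stochastic A"
  shows "(\<Sum>b\<in>Pi\<^sub>E {m..m+n} (\<lambda>_. UNIV). v (b m) * (\<Prod>k\<in>{m..<m+n}. A (b k) (b (Suc k))) * (\<Sum>k\<in>{m..m+n}. c (b k)))
     = (\<Sum>k\<le>n. dotp (itv A v k) c)"
proof (induction n)
  case 0
  have "(\<Sum>b\<in>Pi\<^sub>E {m..m+0} (\<lambda>_. UNIV). v (b m) * (\<Prod>k\<in>{m..<m+0}. A (b k) (b (Suc k))) * (\<Sum>k\<in>{m..m+0}. c (b k)))
     = (\<Sum>b\<in>Pi\<^sub>E (insert m {}) (\<lambda>_. UNIV). v (b m) * c (b m))" by simp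
  also have "\<dots> = dotp v c" by (subst sum_PiE_insert) (auto simp: dotp_def)
  finally show ?case by simp
next
  case (Suc n)
  let ?x = "m + Suc n"
  let ?pi = "\<lambda>g. v (g m) * (\<Prod>k\<in>{m..<m+n}. A (g k) (g (Suc k)))"
  define S where "S g = (\<Sum>k\<in>{m..m+n}. c (g k))" for g :: "nat \<Rightarrow> 'x"
  have rows: "(\<Sum>y\<in>UNIV. A i y) = 1" for i using st unfolding stochastic_def prob_vector_def by simp
  have "(\<Sum>b\<in>Pi\<^sub>E {m..m+Suc n} (\<lambda>_. UNIV). v (b m) * (\<Prod>k\<in>{m..<m+Suc n}. A (b k) (b (Suc k))) * (\<Sum>k\<in>{m..m+Suc n}. c (b k)))
    = (\<Sum>y\<in>UNIV. \<Sum>g\<in>Pi\<^sub>E {m..m+n} (\<lambda>_. UNIV). v ((g(?x:=y)) m) * (\<Prod>k\<in>{m..<m+Suc n}. A ((g(?x:=y)) k) ((g(?x:=y)) (Suc k))) * (\<Sum>k\<in>{m..m+Suc n}. c ((g(?x:=y)) k)))"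
    by (subst (1) ivl_insert, subst sum_PiE_insert) auto
  also have "\<dots> = (\<Sum>y\<in>UNIV. \<Sum>g\<in>Pi\<^sub>E {m..m+n} (\<lambda>_. UNIV). ?pi g * A (g (m+n)) y * (\<Sum>k\<in>{m..m+n}. c (g k)) + ?pi g * (A (g (m+n)) y * c y))"
  proof (intro sum.cong refl)
    fix y g
    have "(\<Prod>k\<in>{m..<m+Suc n}. A ((g(?x:=y)) k) ((g(?x:=y)) (Suc k)))
        = (\<Prod>k\<in>{m..<m+n}. A ((g(?x:=y)) k) ((g(?x:=y)) (Suc k))) * A (g (m+n)) y"
      by (simp add: prod.op_ivl_Suc)
    also have "(\<Prod>k\<in>{m..<m+n}. A ((g(?x:=y)) k) ((g(?x:=y)) (Suc k))) = (\<Prod>k\<in>{m..<m+n}. A (g k) (g (Suc k)))"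
      by (rule prod.cong) auto
    finally have p: "(\<Prod>k\<in>{m..<m+Suc n}. A ((g(?x:=y)) k) ((g(?x:=y)) (Suc k))) = (\<Prod>k\<in>{m..<m+n}. A (g k) (g (Suc k))) * A (g (m+n)) y" .
    have "(\<Sum>k\<in>{m..m+Suc n}. c ((g(?x:=y)) k)) = (\<Sum>k\<in>{m..m+n}. c ((g(?x:=y)) k)) + c y"
      by (simp add: sum.cl_ivl_Suc)
    also have "(\<Sum>k\<in>{m..m+n}. c ((g(?x:=y)) k)) = (\<Sum>k\<in>{m..m+n}. c (g k))"
      by (rule sum.cong) auto
    finally have s: "(\<Sum>k\<in>{m..m+Suc n}. c ((g(?x:=y)) k)) = (\<Sum>k\<in>{m..m+n}. c (g k)) + c y" .
    show "v ((g(?x:=y)) m) * (\<Prod>k\<in>{m..<m+Suc n}. A ((g(?x:=y)) k) ((g(?x:=y)) (Suc k))) * (\<Sum>k\<in>{m..m+Suc n}. c ((g(?x:=y)) k))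
       = ?pi g * A (g (m+n)) y * (\<Sum>k\<in>{m..m+n}. c (g k)) + ?pi g * (A (g (m+n)) y * c y)"
      unfolding p s by (simp add: algebra_simps)
  qed
  also have "\<dots> = (\<Sum>g\<in>Pi\<^sub>E {m..m+n} (\<lambda>_. UNIV). \<Sum>y\<in>UNIV. ?pi g * A (g (m+n)) y * S g)
     + (\<Sum>g\<in>Pi\<^sub>E {m..m+n} (\<lambda>_. UNIV). \<Sum>y\<in>UNIV. ?pi g * (A (g (m+n)) y * c y))"
    unfolding S_def[symmetric] by (simp only: sum.distrib) (rule arg_cong2[where f="(+)"]; rule sum.swap)
  also have "\<dots> = (\<Sum>g\<in>Pi\<^sub>E {m..m+n} (\<lambda>_. UNIV). ?pi g * (\<Sum>y\<in>UNIV. A (g (m+n)) y) * S g)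
     + (\<Sum>g\<in>Pi\<^sub>E {m..m+n} (\<lambda>_. UNIV). ?pi g * (\<lambda>i. \<Sum>y\<in>UNIV. A i y * c y) (g (m+n)))"
    by (simp add: sum_distrib_left sum_distrib_right)
  also have "\<dots> = (\<Sum>g\<in>Pi\<^sub>E {m..m+n} (\<lambda>_. UNIV). ?pi g * S g)
     + (\<Sum>g\<in>Pi\<^sub>E {m..m+n} (\<lambda>_. UNIV). ?pi g * (\<lambda>i. \<Sum>y\<in>UNIV. A i y * c y) (g (m+n)))"
    by (simp add: rows)
  also have "\<dots> = (\<Sum>k\<le>n. dotp (itv A v k) c) + dotp (itv A v n) (\<lambda>i. \<Sum>y\<in>UNIV. A i y * c y)"
    using Suc.IH path_A[of v m A n] unfolding S_def by simp
  also have "\<dots> = (\<Sum>k\<le>Suc n. dotp (itv A v k) c)" by (simp add: dot_vm)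
  finally show ?case .
qed



lemma restrict_eq_iff: "a \<in> Pi\<^sub>E I (\<lambda>_. UNIV) \<Longrightarrow> (restrict f I = a) = (\<forall>k\<in>I. f k = a k)"
  by (auto simp: PiE_def extensional_def fun_eq_iff restrict_def)

lemma expect_formula:
  fixes M :: "'w pmf" and \<phi>1 \<psi> :: "'w \<Rightarrow> nat \<Rightarrow> 'x::finite"
    and A Q :: "'x \<Rightarrow> 'x \<Rightarrow> real"
  assumes m: "1 \<le> m" and st: "stochastic A"
    and hyp: "\<forall>a b. measure_pmf.prob M
          {\<omega>. (\<forall>k<m. \<phi>1 \<omega> k = a k) \<and> (\<forall>k\<in>{m..m+N}. \<psi> \<omega> k = b k)}
        = \<pi>0 (a 0) * (\<Prod>k<m - 1. A (a k) (a (Suc k))) * Q (a (m - 1)) (b m)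
          * (\<Prod>k\<in>{m..<m+N}. A (b k) (b (Suc k)))"
  shows "measure_pmf.expectation M (\<lambda>\<omega>. g (\<phi>1 \<omega> (m - 1)) * (\<Sum>k\<in>{m..m+N}. c (\<psi> \<omega> k)))
       = dotp (itv A \<pi>0 (m - 1)) (\<lambda>i. g i * (\<Sum>n\<le>N. dotp (itv A (Q i) n) c))"
proof -
  define \<phi> where "\<phi> \<omega> = (restrict (\<phi>1 \<omega>) {..<m}, restrict (\<psi> \<omega>) {m..m+N})" for \<omega>
  define F where "F p = g (fst p (m - 1)) * (\<Sum>k\<in>{m..m+N}. c (snd p k))" for p :: "(nat \<Rightarrow> 'x) \<times> (nat \<Rightarrow> 'x)"
  define SA where "SA = Pi\<^sub>E {..<m} (\<lambda>_. UNIV :: 'x set)"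
  define SB where "SB = Pi\<^sub>E {m..m+N} (\<lambda>_. UNIV :: 'x set)"
  have finA: "finite SA" unfolding SA_def by (intro finite_PiE) auto
  have finB: "finite SB" unfolding SB_def by (intro finite_PiE) auto
  have "measure_pmf.expectation M (\<lambda>\<omega>. g (\<phi>1 \<omega> (m - 1)) * (\<Sum>k\<in>{m..m+N}. c (\<psi> \<omega> k)))
      = measure_pmf.expectation M (\<lambda>\<omega>. F (\<phi> \<omega>))"
    using m unfolding F_def \<phi>_def by simp
  also have "\<dots> = measure_pmf.expectation (map_pmf \<phi> M) F" by simp
  also have "\<dots> = (\<Sum>p\<in>SA \<times> SB. pmf (map_pmf \<phi> M) p *\<^sub>R F p)"
  proof (rule integral_measure_pmf)
    show "finite (SA \<times> SB)" using finA finB by simp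
    have mem: "\<phi> \<omega> \<in> SA \<times> SB" for \<omega> unfolding \<phi>_def SA_def SB_def by simp
    fix p assume "p \<in> set_pmf (map_pmf \<phi> M)"
    then obtain \<omega> where "p = \<phi> \<omega>" by auto
    thus "p \<in> SA \<times> SB" using mem by metis
  qed
  also have "\<dots> = (\<Sum>a\<in>SA. \<Sum>b\<in>SB. (\<pi>0 (a 0) * (\<Prod>k<m - 1. A (a k) (a (Suc k)))) * (g (a (m - 1)) *
        (Q (a (m - 1)) (b m) * (\<Prod>k\<in>{m..<m+N}. A (b k) (b (Suc k))) * (\<Sum>k\<in>{m..m+N}. c (b k)))))"
    unfolding sum.cartesian_product
  proof (rule sum.cong[OF refl], clarify)
    fix a b assume ab: "a \<in> SA" "b \<in> SB"
    have "\<phi> -` {(a, b)} = {\<omega>. (\<forall>k<m. \<phi>1 \<omega> k = a k) \<and> (\<forall>k\<in>{m..m+N}. \<psi> \<omega> k = b k)}"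
      using ab unfolding \<phi>_def SA_def SB_def by (auto simp: restrict_eq_iff)
    hence "pmf (map_pmf \<phi> M) (a, b) = \<pi>0 (a 0) * (\<Prod>k<m - 1. A (a k) (a (Suc k))) * Q (a (m - 1)) (b m)
          * (\<Prod>k\<in>{m..<m+N}. A (b k) (b (Suc k)))"
      using hyp by (simp add: pmf_map)
    thus "pmf (map_pmf \<phi> M) (a, b) *\<^sub>R F (a, b) = (\<pi>0 (a 0) * (\<Prod>k<m - 1. A (a k) (a (Suc k)))) * (g (a (m - 1)) *
        (Q (a (m - 1)) (b m) * (\<Prod>k\<in>{m..<m+N}. A (b k) (b (Suc k))) * (\<Sum>k\<in>{m..m+N}. c (b k))))"
      unfolding F_def by (simp add: mult_ac)
  qed
  also have "\<dots> = (\<Sum>a\<in>SA. (\<pi>0 (a 0) * (\<Prod>k<m - 1. A (a k) (a (Suc k)))) * (\<lambda>i. g i * (\<Sum>n\<le>N. dotp (itv A (Q i) n) c)) (a (m - 1)))"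
  proof (rule sum.cong[OF refl])
    fix a
    have "(\<Sum>b\<in>SB. Q (a (m - 1)) (b m) * (\<Prod>k\<in>{m..<m+N}. A (b k) (b (Suc k))) * (\<Sum>k\<in>{m..m+N}. c (b k)))
        = (\<Sum>n\<le>N. dotp (itv A (Q (a (m - 1))) n) c)"
      unfolding SB_def by (rule path_B[OF st])
    thus "(\<Sum>b\<in>SB. (\<pi>0 (a 0) * (\<Prod>k<m - 1. A (a k) (a (Suc k)))) * (g (a (m - 1)) *
        (Q (a (m - 1)) (b m) * (\<Prod>k\<in>{m..<m+N}. A (b k) (b (Suc k))) * (\<Sum>k\<in>{m..m+N}. c (b k)))))
      = (\<pi>0 (a 0) * (\<Prod>k<m - 1. A (a k) (a (Suc k)))) * (\<lambda>i. g i * (\<Sum>n\<le>N. dotp (itv A (Q i) n) c)) (a (m - 1))"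
      by (simp only: sum_distrib_left[symmetric])
  qed
  also have "\<dots> = dotp (itv A \<pi>0 (m - 1)) (\<lambda>i. g i * (\<Sum>n\<le>N. dotp (itv A (Q i) n) c))"
  proof -
    have e1: "{..<m} = {0..0 + (m - 1)}" using m by auto
    have e2: "{..<m - 1} = {0..<0 + (m - 1)}" by auto
    show ?thesis unfolding SA_def e1 e2 using path_A[of \<pi>0 0 A "m - 1"] by simp
  qed
  finally show ?thesis .
qed



lemma l1_diff_bound:
  fixes P :: "real \<Rightarrow> 'x::finite \<Rightarrow> 'x \<Rightarrow> real" and \<pi> :: "real \<Rightarrow> 'x \<Rightarrow> real"
  assumes st: "stochastic (P \<theta>)" and sta: "stationary (P \<theta>) (\<pi> \<theta>)" and stt: "stationary (P t) (\<pi> t)"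
    and rho: "dobrushin (P \<theta>) < 1"
  shows "\<bar>\<pi> t i - \<pi> \<theta> i\<bar> \<le> (\<Sum>i\<in>UNIV. \<Sum>j\<in>UNIV. \<bar>P t i j - P \<theta> i j\<bar>) / (1 - dobrushin (P \<theta>))"
proof -
  define \<delta> where "\<delta> j = \<pi> t j - \<pi> \<theta> j" for j
  define w where "w j = (\<Sum>i\<in>UNIV. \<pi> t i * (P t i j - P \<theta> i j))" for j
  have s1: "(\<Sum>i\<in>UNIV. \<pi> t i) = 1" "(\<Sum>i\<in>UNIV. \<pi> \<theta> i) = 1"
    using sta stt unfolding stationary_def prob_vector_def by auto
  have ptnn: "0 \<le> \<pi> t i" for i using stt unfolding stationary_def prob_vector_def by auto
  have ptle: "\<pi> t i \<le> 1" for i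
    using member_le_sum[of i UNIV "\<pi> t"] ptnn s1 by auto
  have dsum: "(\<Sum>j\<in>UNIV. \<delta> j) = 0" unfolding \<delta>_def using s1 by (simp add: sum_subtractf)
  have dec: "\<delta> j = w j + vm \<delta> (P \<theta>) j" for j
  proof -
    have "vm \<delta> (P \<theta>) j = (\<Sum>i\<in>UNIV. \<pi> t i * P \<theta> i j) - \<pi> \<theta> j"
      using sta unfolding vm_def \<delta>_def stationary_def by (simp add: algebra_simps sum_subtractf)
    moreover have "w j = \<pi> t j - (\<Sum>i\<in>UNIV. \<pi> t i * P \<theta> i j)"
      using stt unfolding w_def stationary_def by (simp add: algebra_simps sum_subtractf)
    ultimately show ?thesis unfolding \<delta>_def by simp
  qed
  have "l1 \<delta> \<le> l1 w + l1 (vm \<delta> (P \<theta>))"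
    unfolding l1_def by (subst sum.distrib[symmetric], rule sum_mono) (simp add: dec abs_triangle_ineq)
  also have "\<dots> \<le> l1 w + dobrushin (P \<theta>) * l1 \<delta>" using contract[OF dsum] by simp
  finally have l1d: "(1 - dobrushin (P \<theta>)) * l1 \<delta> \<le> l1 w" by (simp add: algebra_simps)
  have "l1 w \<le> (\<Sum>j\<in>UNIV. \<Sum>i\<in>UNIV. \<bar>P t i j - P \<theta> i j\<bar>)"
    unfolding l1_def w_def
  proof (rule sum_mono)
    fix j
    show "\<bar>\<Sum>i\<in>UNIV. \<pi> t i * (P t i j - P \<theta> i j)\<bar> \<le> (\<Sum>i\<in>UNIV. \<bar>P t i j - P \<theta> i j\<bar>)"
    proof (rule order_trans[OF sum_abs], rule sum_mono)
      fix i show "\<bar>\<pi> t i * (P t i j - P \<theta> i j)\<bar> \<le> \<bar>P t i j - P \<theta> i j\<bar>"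
        using ptnn[of i] ptle[of i] by (simp add: abs_mult mult_left_le_one_le)
    qed
  qed
  also have "\<dots> = (\<Sum>i\<in>UNIV. \<Sum>j\<in>UNIV. \<bar>P t i j - P \<theta> i j\<bar>)" by (rule sum.swap)
  finally have "(1 - dobrushin (P \<theta>)) * l1 \<delta> \<le> (\<Sum>i\<in>UNIV. \<Sum>j\<in>UNIV. \<bar>P t i j - P \<theta> i j\<bar>)"
    using l1d by linarith
  hence "l1 \<delta> \<le> (\<Sum>i\<in>UNIV. \<Sum>j\<in>UNIV. \<bar>P t i j - P \<theta> i j\<bar>) / (1 - dobrushin (P \<theta>))"
    using rho by (simp add: field_simps)
  moreover have "\<bar>\<delta> i\<bar> \<le> l1 \<delta>" unfolding l1_def by (rule member_le_sum[where f="\<lambda>i. \<bar>\<delta> i\<bar>"]) auto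
  ultimately show ?thesis unfolding \<delta>_def by linarith
qed

lemma deriv_part:
  fixes P :: "real \<Rightarrow> 'x::finite \<Rightarrow> 'x \<Rightarrow> real" and \<pi> :: "real \<Rightarrow> 'x \<Rightarrow> real"
  assumes U: "open U" "\<theta> \<in> U" and st: "\<forall>t\<in>U. stochastic (P t)"
    and sta: "\<forall>t\<in>U. stationary (P t) (\<pi> t)" and rho: "dobrushin (P \<theta>) < 1"
    and der: "\<forall>i j. ((\<lambda>s. P s i j) has_real_derivative P' i j) (at \<theta>)"
    and poi: "\<forall>j. (\<Sum>l\<in>UNIV. P \<theta> j l * h l) = h j - c j + dotp (\<pi> \<theta>) c"
  shows "((\<lambda>t. \<Sum>i\<in>UNIV. c i * \<pi> t i) has_real_derivative (\<Sum>i\<in>UNIV. \<Sum>j\<in>UNIV. \<pi> \<theta> i * P' i j * h j)) (at \<theta>)"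
proof -
  have evU: "eventually (\<lambda>t. t \<in> U) (at \<theta>)" by (rule eventually_at_in_open'[OF U])
  have cont: "((\<lambda>s. P s i j) \<longlongrightarrow> P \<theta> i j) (at \<theta>)" for i j
    using DERIV_isCont[OF der[rule_format, of i j]] by (simp add: isCont_def)
  have W0: "((\<lambda>t. (\<Sum>i\<in>UNIV. \<Sum>j\<in>UNIV. \<bar>P t i j - P \<theta> i j\<bar>) / (1 - dobrushin (P \<theta>))) \<longlongrightarrow> 0) (at \<theta>)"
  proof -
    have "((\<lambda>t. (\<Sum>i\<in>UNIV. \<Sum>j\<in>UNIV. \<bar>P t i j - P \<theta> i j\<bar>)) \<longlongrightarrow> (\<Sum>i\<in>UNIV. \<Sum>j\<in>UNIV. \<bar>P \<theta> i j - P \<theta> i j\<bar>)) (at \<theta>)"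
      by (intro tendsto_sum tendsto_rabs tendsto_diff cont tendsto_const)
    hence "((\<lambda>t. (\<Sum>i\<in>UNIV. \<Sum>j\<in>UNIV. \<bar>P t i j - P \<theta> i j\<bar>)) \<longlongrightarrow> 0) (at \<theta>)" by simp
    thus ?thesis by (rule tendsto_divide_zero)
  qed
  have pcont: "((\<lambda>t. \<pi> t i) \<longlongrightarrow> \<pi> \<theta> i) (at \<theta>)" for i
  proof (rule LIM_zero_cancel, rule Lim_null_comparison[OF _ W0])
    show "\<forall>\<^sub>F t in at \<theta>. norm (\<pi> t i - \<pi> \<theta> i) \<le> (\<Sum>i\<in>UNIV. \<Sum>j\<in>UNIV. \<bar>P t i j - P \<theta> i j\<bar>) / (1 - dobrushin (P \<theta>))"
      using evU
    proof (rule eventually_mono)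
      fix t assume "t \<in> U"
      thus "norm (\<pi> t i - \<pi> \<theta> i) \<le> (\<Sum>i\<in>UNIV. \<Sum>j\<in>UNIV. \<bar>P t i j - P \<theta> i j\<bar>) / (1 - dobrushin (P \<theta>))"
        using l1_diff_bound[of P \<theta> \<pi> t i] st sta U rho by simp
    qed
  qed
  define f where "f t = (\<Sum>i\<in>UNIV. c i * \<pi> t i)" for t
  have fdiff: "f t - f \<theta> = (\<Sum>i\<in>UNIV. \<Sum>j\<in>UNIV. \<pi> t i * (P t i j - P \<theta> i j) * h j)" if "t \<in> U" for t
  proof -
    have stt: "stationary (P t) (\<pi> t)" using sta that by auto
    have s1: "(\<Sum>i\<in>UNIV. \<pi> t i) = 1" using stt unfolding stationary_def prob_vector_def by auto
    have "(\<Sum>i\<in>UNIV. \<Sum>j\<in>UNIV. \<pi> t i * (P t i j - P \<theta> i j) * h j)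
        = (\<Sum>i\<in>UNIV. \<Sum>j\<in>UNIV. \<pi> t i * P t i j * h j) - (\<Sum>i\<in>UNIV. \<pi> t i * (\<Sum>j\<in>UNIV. P \<theta> i j * h j))"
      by (simp add: algebra_simps sum_subtractf sum_distrib_left)
    also have "(\<Sum>i\<in>UNIV. \<Sum>j\<in>UNIV. \<pi> t i * P t i j * h j) = (\<Sum>j\<in>UNIV. (\<Sum>i\<in>UNIV. \<pi> t i * P t i j) * h j)"
      by (subst sum.swap) (simp add: sum_distrib_right)
    also have "\<dots> = (\<Sum>j\<in>UNIV. \<pi> t j * h j)" using stt unfolding stationary_def by simp
    also have "(\<Sum>i\<in>UNIV. \<pi> t i * (\<Sum>j\<in>UNIV. P \<theta> i j * h j)) = (\<Sum>i\<in>UNIV. \<pi> t i * h i) - (\<Sum>i\<in>UNIV. \<pi> t i * c i) + (\<Sum>i\<in>UNIV. \<pi> t i) * dotp (\<pi> \<theta>) c"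
    proof -
      have "(\<Sum>i\<in>UNIV. \<pi> t i * (\<Sum>j\<in>UNIV. P \<theta> i j * h j)) = (\<Sum>i\<in>UNIV. \<pi> t i * (h i - c i + dotp (\<pi> \<theta>) c))"
        by (rule sum.cong[OF refl]) (simp only: poi[rule_format])
      also have "\<dots> = (\<Sum>i\<in>UNIV. \<pi> t i * h i) - (\<Sum>i\<in>UNIV. \<pi> t i * c i) + (\<Sum>i\<in>UNIV. \<pi> t i) * dotp (\<pi> \<theta>) c"
        by (simp add: algebra_simps sum_subtractf sum.distrib sum_distrib_right sum_distrib_left mult.commute)
      finally show ?thesis .
    qed
    finally show ?thesis unfolding f_def dotp_def s1 by (simp add: mult.commute)
  qed
  have "((\<lambda>t. (f t - f \<theta>) / (t - \<theta>)) \<longlongrightarrow> (\<Sum>i\<in>UNIV. \<Sum>j\<in>UNIV. \<pi> \<theta> i * P' i j * h j)) (at \<theta>)"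
  proof (rule Lim_transform_eventually)
    show "((\<lambda>t. \<Sum>i\<in>UNIV. \<Sum>j\<in>UNIV. \<pi> t i * ((P t i j - P \<theta> i j) / (t - \<theta>)) * h j) \<longlongrightarrow> (\<Sum>i\<in>UNIV. \<Sum>j\<in>UNIV. \<pi> \<theta> i * P' i j * h j)) (at \<theta>)"
      using der by (intro tendsto_sum tendsto_mult pcont tendsto_const) (simp add: has_field_derivative_iff)
    show "\<forall>\<^sub>F t in at \<theta>. (\<Sum>i\<in>UNIV. \<Sum>j\<in>UNIV. \<pi> t i * ((P t i j - P \<theta> i j) / (t - \<theta>)) * h j) = (f t - f \<theta>) / (t - \<theta>)"
      using evU
    proof (rule eventually_mono)
      fix t assume "t \<in> U"
      thus "(\<Sum>i\<in>UNIV. \<Sum>j\<in>UNIV. \<pi> t i * ((P t i j - P \<theta> i j) / (t - \<theta>)) * h j) = (f t - f \<theta>) / (t - \<theta>)"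
        by (simp add: fdiff sum_divide_distrib)
    qed
  qed
  thus ?thesis unfolding f_def[abs_def] by (simp add: has_field_derivative_iff)
qed



lemma pmf_integrable_bounded:
  fixes f :: "'a \<Rightarrow> real"
  assumes "\<And>x. \<bar>f x\<bar> \<le> B"
  shows "integrable (measure_pmf M) f"
  using assms by (intro measure_pmf.integrable_const_bound[where B=B]) auto

lemma abs_le_l1: "\<bar>v i\<bar> \<le> l1 v"
  unfolding l1_def by (rule member_le_sum[where f="\<lambda>i. \<bar>v i\<bar>"]) auto

lemma tele_step:
  fixes A :: "'x::finite \<Rightarrow> 'x \<Rightarrow> real"
  assumes st: "stochastic A" and poi: "\<forall>j. (\<Sum>l\<in>UNIV. A j l * h l) = h j - c j + \<kappa>"
    and s0: "(\<Sum>i\<in>UNIV. v i) = 0"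
  shows "dotp (itv A v n) c = dotp (itv A v n) h - dotp (itv A v (Suc n)) h"
proof -
  define x where "x = itv A v n"
  have sx: "(\<Sum>i\<in>UNIV. x i) = 0" unfolding x_def using itv_sum[OF st] s0 by simp
  have "dotp (itv A v (Suc n)) h = dotp x (\<lambda>i. \<Sum>j\<in>UNIV. A i j * h j)" by (simp add: x_def dot_vm)
  also have "\<dots> = dotp x (\<lambda>i. h i - c i + \<kappa>)" using poi by simp
  also have "\<dots> = dotp x h - dotp x c + \<kappa> * (\<Sum>i\<in>UNIV. x i)"
    unfolding dotp_def by (simp add: algebra_simps sum_subtractf sum.distrib sum_distrib_left)
  finally show ?thesis using sx unfolding x_def by simp
qed

lemma tele:
  fixes A :: "'x::finite \<Rightarrow> 'x \<Rightarrow> real"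
  assumes st: "stochastic A" and poi: "\<forall>j. (\<Sum>l\<in>UNIV. A j l * h l) = h j - c j + \<kappa>"
    and s0: "(\<Sum>i\<in>UNIV. v i) = 0"
  shows "(\<Sum>n\<le>N. dotp (itv A v n) c) = dotp v h - dotp (itv A v (Suc N)) h"
proof -
  have "(\<Sum>n\<le>N. dotp (itv A v n) c) = (\<Sum>n\<le>N. dotp (itv A v n) h - dotp (itv A v (Suc n)) h)"
    using tele_step[OF st poi s0] by simp
  also have "\<dots> = dotp v h - dotp (itv A v (Suc N)) h" by (subst sum_telescope) simp
  finally show ?thesis .
qed

theorem theorem2p3:
  fixes U :: "real set" and \<theta> :: real
    and P :: "real \<Rightarrow> 'x::finite \<Rightarrow> 'x \<Rightarrow> real"
    and \<pi> :: "real \<Rightarrow> 'x \<Rightarrow> real"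
    and Pd Pdd :: "'x \<Rightarrow> 'x \<Rightarrow> real"
    and g c :: "'x \<Rightarrow> real"
  assumes "open U" and "\<theta> \<in> U"
    and "\<forall>t\<in>U. stochastic (P t) \<and> regular (P t)"
    and "\<forall>t\<in>U. \<forall>i j. (\<lambda>s. P s i j) differentiable (at t)"
    and "\<forall>t\<in>U. stationary (P t) (\<pi> t)"
    and "0 < dobrushin (P \<theta>)" and "dobrushin (P \<theta>) < 1"
    and "stochastic Pd" and "stochastic Pdd"
    and "\<forall>i j. ((\<lambda>s. P s i j) has_real_derivative (g i * (Pd i j - Pdd i j))) (at \<theta>)"
  shows "\<exists>D K1 K2. ((\<lambda>t. \<Sum>i\<in>UNIV. c i * \<pi> t i) has_real_derivative D) (at \<theta>) \<and>
    (\<forall>(m::nat) (N::nat) (\<pi>0 :: 'x \<Rightarrow> real)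
       (M :: ((nat \<Rightarrow> 'x) \<times> (nat \<Rightarrow> 'x) \<times> (nat \<Rightarrow> 'x)) pmf).
      1 \<le> m \<longrightarrow> prob_vector \<pi>0 \<longrightarrow>
      (\<forall>a b. measure_pmf.prob M
          {\<omega>. (\<forall>k<m. fst \<omega> k = a k) \<and> (\<forall>k\<in>{m..m+N}. fst (snd \<omega>) k = b k)}
        = \<pi>0 (a 0) * (\<Prod>k<m - 1. P \<theta> (a k) (a (Suc k))) * Pd (a (m - 1)) (b m)
          * (\<Prod>k\<in>{m..<m+N}. P \<theta> (b k) (b (Suc k)))) \<longrightarrow>
      (\<forall>a b. measure_pmf.prob M
          {\<omega>. (\<forall>k<m. fst \<omega> k = a k) \<and> (\<forall>k\<in>{m..m+N}. snd (snd \<omega>) k = b k)}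
        = \<pi>0 (a 0) * (\<Prod>k<m - 1. P \<theta> (a k) (a (Suc k))) * Pdd (a (m - 1)) (b m)
          * (\<Prod>k\<in>{m..<m+N}. P \<theta> (b k) (b (Suc k)))) \<longrightarrow>
      \<bar>measure_pmf.expectation M
          (\<lambda>\<omega>. g (fst \<omega> (m - 1)) *
             (\<Sum>k\<in>{m..m+N}. c (fst (snd \<omega>) k) - c (snd (snd \<omega>) k))) - D\<bar>
        \<le> K1 * dobrushin (P \<theta>) ^ m * var_dist \<pi>0 (\<pi> \<theta>) + K2 * dobrushin (P \<theta>) ^ N)"
proof -
  note U = assms(1,2)
  have stU: "\<forall>t\<in>U. stochastic (P t)" using assms(3) by auto
  have st0: "stochastic (P \<theta>)" using stU U by auto
  have sta0: "stationary (P \<theta>) (\<pi> \<theta>)" using assms(5) U by auto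
  define \<rho> where "\<rho> = dobrushin (P \<theta>)"
  have rpos: "0 < \<rho>" and rlt: "\<rho> < 1" using assms(6,7) unfolding \<rho>_def by auto
  define p where "p = \<pi> \<theta>"
  obtain h where poi: "\<forall>j. (\<Sum>l\<in>UNIV. P \<theta> j l * h l) = h j - c j + dotp p c"
    using poisson_exists[OF st0 sta0 assms(7), of c] unfolding p_def by blast
  define d where "d i = (\<lambda>j. Pd i j - Pdd i j)" for i
  have dsum: "(\<Sum>j\<in>UNIV. d i j) = 0" for i
    using assms(8,9) unfolding d_def stochastic_def prob_vector_def by (simp add: sum_subtractf)
  have l1d: "l1 (d i) \<le> 2" for i
  proof -
    have "l1 (d i) \<le> (\<Sum>j\<in>UNIV. Pd i j + Pdd i j)"
      unfolding l1_def d_def using assms(8,9) unfolding stochastic_def prob_vector_def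
      by (intro sum_mono) (simp add: abs_le_iff)
    also have "\<dots> = 2" using assms(8,9) unfolding stochastic_def prob_vector_def by (simp add: sum.distrib)
    finally show ?thesis .
  qed
  define D where "D = (\<Sum>i\<in>UNIV. \<Sum>j\<in>UNIV. \<pi> \<theta> i * (g i * (Pd i j - Pdd i j)) * h j)"
  have deriv: "((\<lambda>t. \<Sum>i\<in>UNIV. c i * \<pi> t i) has_real_derivative D) (at \<theta>)"
    unfolding D_def
    by (rule deriv_part[OF U stU assms(5,7) assms(10)]) (use poi in \<open>simp add: p_def\<close>)
  define T where "T i = g i * dotp (d i) h" for i
  have DT: "D = dotp p T"
    unfolding D_def dotp_def T_def p_def d_def by (simp add: sum_distrib_left mult_ac)
  define K1 where "K1 = 2 * l1 T / \<rho>"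
  define K2 where "K2 = 2 * l1 g * l1 h"
  have main: "\<bar>measure_pmf.expectation M
          (\<lambda>\<omega>. g (fst \<omega> (m - 1)) *
             (\<Sum>k\<in>{m..m+N}. c (fst (snd \<omega>) k) - c (snd (snd \<omega>) k))) - D\<bar>
        \<le> K1 * \<rho> ^ m * var_dist \<pi>0 (\<pi> \<theta>) + K2 * \<rho> ^ N"
    if m: "1 \<le> m" and pv: "prob_vector \<pi>0"
      and h1: "\<forall>a b. measure_pmf.prob M
          {\<omega>. (\<forall>k<m. fst \<omega> k = a k) \<and> (\<forall>k\<in>{m..m+N}. fst (snd \<omega>) k = b k)}
        = \<pi>0 (a 0) * (\<Prod>k<m - 1. P \<theta> (a k) (a (Suc k))) * Pd (a (m - 1)) (b m)
          * (\<Prod>k\<in>{m..<m+N}. P \<theta> (b k) (b (Suc k)))"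
      and h2: "\<forall>a b. measure_pmf.prob M
          {\<omega>. (\<forall>k<m. fst \<omega> k = a k) \<and> (\<forall>k\<in>{m..m+N}. snd (snd \<omega>) k = b k)}
        = \<pi>0 (a 0) * (\<Prod>k<m - 1. P \<theta> (a k) (a (Suc k))) * Pdd (a (m - 1)) (b m)
          * (\<Prod>k\<in>{m..<m+N}. P \<theta> (b k) (b (Suc k)))"
    for m N \<pi>0 and M :: "((nat \<Rightarrow> 'x) \<times> (nat \<Rightarrow> 'x) \<times> (nat \<Rightarrow> 'x)) pmf"
  proof -
    define \<mu> where "\<mu> = itv (P \<theta>) \<pi>0 (m - 1)"
    define F1 where "F1 \<omega> = g (fst \<omega> (m - 1)) * (\<Sum>k\<in>{m..m+N}. c (fst (snd \<omega>) k))"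
      for \<omega> :: "(nat \<Rightarrow> 'x) \<times> (nat \<Rightarrow> 'x) \<times> (nat \<Rightarrow> 'x)"
    define F2 where "F2 \<omega> = g (fst \<omega> (m - 1)) * (\<Sum>k\<in>{m..m+N}. c (snd (snd \<omega>) k))"
      for \<omega> :: "(nat \<Rightarrow> 'x) \<times> (nat \<Rightarrow> 'x) \<times> (nat \<Rightarrow> 'x)"
    have bnd: "\<bar>g x * (\<Sum>k\<in>{m..m+N}. c (y k))\<bar> \<le> l1 g * (\<Sum>k\<in>{m..m+N}. l1 c)" for x y
    proof -
      have "\<bar>\<Sum>k\<in>{m..m+N}. c (y k)\<bar> \<le> (\<Sum>k\<in>{m..m+N}. l1 c)"
        by (rule order_trans[OF sum_abs], rule sum_mono, rule abs_le_l1)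
      thus ?thesis unfolding abs_mult by (intro mult_mono abs_le_l1) (auto simp: l1_nonneg)
    qed
    have i1: "integrable (measure_pmf M) F1" unfolding F1_def by (rule pmf_integrable_bounded, rule bnd)
    have i2: "integrable (measure_pmf M) F2" unfolding F2_def by (rule pmf_integrable_bounded, rule bnd)
    have E1: "measure_pmf.expectation M F1 = dotp \<mu> (\<lambda>i. g i * (\<Sum>n\<le>N. dotp (itv (P \<theta>) (Pd i) n) c))"
      unfolding F1_def \<mu>_def by (rule expect_formula[OF m st0 h1])
    have E2: "measure_pmf.expectation M F2 = dotp \<mu> (\<lambda>i. g i * (\<Sum>n\<le>N. dotp (itv (P \<theta>) (Pdd i) n) c))"
      unfolding F2_def \<mu>_def by (rule expect_formula[OF m st0 h2])
    define R where "R i = g i * dotp (itv (P \<theta>) (d i) (Suc N)) h" for i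
    have "measure_pmf.expectation M
          (\<lambda>\<omega>. g (fst \<omega> (m - 1)) * (\<Sum>k\<in>{m..m+N}. c (fst (snd \<omega>) k) - c (snd (snd \<omega>) k)))
        = measure_pmf.expectation M (\<lambda>\<omega>. F1 \<omega> - F2 \<omega>)"
      unfolding F1_def F2_def by (simp add: sum_subtractf right_diff_distrib)
    also have "\<dots> = measure_pmf.expectation M F1 - measure_pmf.expectation M F2"
      by (rule Bochner_Integration.integral_diff[OF i1 i2])
    also have "\<dots> = dotp \<mu> (\<lambda>i. g i * ((\<Sum>n\<le>N. dotp (itv (P \<theta>) (Pd i) n) c) - (\<Sum>n\<le>N. dotp (itv (P \<theta>) (Pdd i) n) c)))"
      unfolding E1 E2 dotp_def by (simp add: algebra_simps sum_subtractf)
    also have "\<dots> = dotp \<mu> (\<lambda>i. T i - R i)"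
    proof -
      have "(\<Sum>n\<le>N. dotp (itv (P \<theta>) (Pd i) n) c) - (\<Sum>n\<le>N. dotp (itv (P \<theta>) (Pdd i) n) c)
          = (\<Sum>n\<le>N. dotp (itv (P \<theta>) (d i) n) c)" for i
        unfolding d_def itv_diff dotp_diff by (simp add: sum_subtractf)
      also have "(\<Sum>n\<le>N. dotp (itv (P \<theta>) (d i) n) c) = dotp (d i) h - dotp (itv (P \<theta>) (d i) (Suc N)) h" for i
        by (rule tele[OF st0 poi dsum])
      finally show ?thesis unfolding T_def R_def by (simp add: right_diff_distrib)
    qed
    finally have EQ: "measure_pmf.expectation M
          (\<lambda>\<omega>. g (fst \<omega> (m - 1)) * (\<Sum>k\<in>{m..m+N}. c (fst (snd \<omega>) k) - c (snd (snd \<omega>) k)))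
        - D = dotp (\<lambda>j. \<mu> j - p j) T - dotp \<mu> R"
      unfolding DT dotp_def by (simp add: algebra_simps sum_subtractf)
    have mup: "(\<lambda>j. \<mu> j - p j) = itv (P \<theta>) (\<lambda>j. \<pi>0 j - p j) (m - 1)"
      unfolding \<mu>_def itv_diff p_def itv_stat[OF sta0] ..
    have s0: "(\<Sum>j\<in>UNIV. \<pi>0 j - p j) = 0"
      using pv sta0 unfolding p_def stationary_def prob_vector_def by (simp add: sum_subtractf)
    have t1: "\<bar>dotp (\<lambda>j. \<mu> j - p j) T\<bar> \<le> K1 * \<rho> ^ m * var_dist \<pi>0 (\<pi> \<theta>)"
    proof -
      have "\<bar>dotp (\<lambda>j. \<mu> j - p j) T\<bar> \<le> l1 (\<lambda>j. \<mu> j - p j) * l1 T" by (rule dot_bound)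
      also have "\<dots> \<le> (\<rho> ^ (m - 1) * l1 (\<lambda>j. \<pi>0 j - p j)) * l1 T"
        unfolding mup \<rho>_def by (intro mult_right_mono itv_contract[OF st0 s0] l1_nonneg)
      also have "l1 (\<lambda>j. \<pi>0 j - p j) = 2 * var_dist \<pi>0 (\<pi> \<theta>)" unfolding l1_def var_dist_def p_def by simp
      also have "\<rho> ^ (m - 1) * (2 * var_dist \<pi>0 (\<pi> \<theta>)) * l1 T = K1 * \<rho> ^ m * var_dist \<pi>0 (\<pi> \<theta>)"
      proof -
        have "\<rho> ^ m = \<rho> * \<rho> ^ (m - 1)" using m by (cases m) auto
        thus ?thesis unfolding K1_def using rpos by (simp add: field_simps)
      qed
      finally show ?thesis .
    qed
    have t2: "\<bar>dotp \<mu> R\<bar> \<le> K2 * \<rho> ^ N"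
    proof -
      have pmu: "prob_vector \<mu>" unfolding \<mu>_def by (rule itv_prob[OF st0 pv])
      have l1mu: "l1 \<mu> = 1" using pmu unfolding prob_vector_def l1_def by simp
      have "l1 R \<le> (\<Sum>i\<in>UNIV. \<bar>g i\<bar> * (\<rho> ^ N * 2 * l1 h))"
        unfolding l1_def[of R]
      proof (rule sum_mono)
        fix i
        have "\<bar>dotp (itv (P \<theta>) (d i) (Suc N)) h\<bar> \<le> l1 (itv (P \<theta>) (d i) (Suc N)) * l1 h" by (rule dot_bound)
        also have "\<dots> \<le> (\<rho> ^ Suc N * l1 (d i)) * l1 h"
          unfolding \<rho>_def by (intro mult_right_mono itv_contract[OF st0 dsum] l1_nonneg)
        also have "\<dots> \<le> (\<rho> ^ N * 2) * l1 h"
        proof (intro mult_right_mono l1_nonneg)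
          have "\<rho> ^ Suc N \<le> \<rho> ^ N" using rpos rlt by (simp add: mult_left_le_one_le)
          thus "\<rho> ^ Suc N * l1 (d i) \<le> \<rho> ^ N * 2"
            using l1d[of i] rpos by (intro mult_mono) (auto simp: l1_nonneg)
        qed
        finally show "\<bar>R i\<bar> \<le> \<bar>g i\<bar> * (\<rho> ^ N * 2 * l1 h)"
          unfolding R_def abs_mult by (intro mult_left_mono) auto
      qed
      also have "\<dots> = K2 * \<rho> ^ N" unfolding K2_def l1_def[of g] by (simp add: sum_distrib_right sum_distrib_left mult_ac)
      finally have "l1 R \<le> K2 * \<rho> ^ N" .
      thus ?thesis using dot_bound[of \<mu> R] l1mu by simp
    qed
    show ?thesis unfolding EQ using t1 t2 by linarith
  qed
  have main': "\<And>m N \<pi>0 M. 1 \<le> m \<Longrightarrow> prob_vector \<pi>0 \<Longrightarrow>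
      (\<forall>a b. measure_pmf.prob M
          {\<omega>. (\<forall>k<m. fst \<omega> k = a k) \<and> (\<forall>k\<in>{m..m+N}. fst (snd \<omega>) k = b k)}
        = \<pi>0 (a 0) * (\<Prod>k<m - 1. P \<theta> (a k) (a (Suc k))) * Pd (a (m - 1)) (b m)
          * (\<Prod>k\<in>{m..<m+N}. P \<theta> (b k) (b (Suc k)))) \<Longrightarrow>
      (\<forall>a b. measure_pmf.prob M
          {\<omega>. (\<forall>k<m. fst \<omega> k = a k) \<and> (\<forall>k\<in>{m..m+N}. snd (snd \<omega>) k = b k)}
        = \<pi>0 (a 0) * (\<Prod>k<m - 1. P \<theta> (a k) (a (Suc k))) * Pdd (a (m - 1)) (b m)
          * (\<Prod>k\<in>{m..<m+N}. P \<theta> (b k) (b (Suc k)))) \<Longrightarrow>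
      \<bar>measure_pmf.expectation M
          (\<lambda>\<omega>. g (fst \<omega> (m - 1)) *
             (\<Sum>k\<in>{m..m+N}. c (fst (snd \<omega>) k) - c (snd (snd \<omega>) k))) - D\<bar>
        \<le> K1 * dobrushin (P \<theta>) ^ m * var_dist \<pi>0 (\<pi> \<theta>) + K2 * dobrushin (P \<theta>) ^ N"
    using main unfolding \<rho>_def by blast
  show ?thesis
    by (rule exI[of _ D], rule exI[of _ K1], rule exI[of _ K2], intro conjI allI impI deriv, rule main')
qed

end
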